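(* Let $\mathbb{K}\in\{\mathbb{R},\mathbb{C}\}$, $d,m,n\ge1$ with $(m,n)\ne(1,1)$ and $d(\mathbb{K})mn\ge4$. Then $\mathrm{Q}^{d,m}_n(\mathbb{K})$ is simply connected.
   Context: $d(\mathbb{K})=\dim_\mathbb{R}\mathbb{K}$. $\mathrm{Q}^{d,m}_n(\mathbb{K})$ is the space of $m$-tuples $(f_1,\dots,f_m)$ of monic degree-$d$ polynomials with coefficients in $\mathbb{K}$ having no common real root of multiplicity $\ge n$ (common non-real roots of any multiplicity allowed), topologized as a subspace of $\mathbb{K}^{dm}$ via coefficients. *)

theory Defs
  imports "HOL-Analysis.Analysis" "HOL-Computational_Algebra.Polynomial"
begin

text \<open>A point of the coefficient space is \<open>c :: nat \<Rightarrow> nat \<Rightarrow> 'k\<close>, where \<open>c i j\<close>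
  (for \<open>i < m\<close>, \<open>j < d\<close>) is the coefficient of \<open>x^j\<close> in the \<open>i\<close>-th polynomial;
  all other entries are zero. This set carries the product topology, which on this
  subset is the Euclidean topology of \<open>K^(dm)\<close>.\<close>

definition monic_poly_of :: "nat \<Rightarrow> (nat \<Rightarrow> 'k::comm_ring_1) \<Rightarrow> 'k poly" where
  "monic_poly_of d a = monom 1 d + (\<Sum>j<d. monom (a j) j)"

definition Qspace :: "nat \<Rightarrow> nat \<Rightarrow> nat \<Rightarrow> (nat \<Rightarrow> nat \<Rightarrow> 'k::real_normed_field) set" where
  "Qspace d m n = {c. (\<forall>i j. (m \<le> i \<or> d \<le> j) \<longrightarrow> c i j = 0) \<and>
      \<not> (\<exists>x::real. \<forall>i<m. n \<le> order (of_real x) (monic_poly_of d (c i)))}"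

end

theory Submission
  imports Defs
begin


definition tau :: "nat \<Rightarrow> 'k::field poly \<Rightarrow> 'k \<Rightarrow> 'k poly" where
  "tau n f a = (\<Sum>l<n. smult (coeff (pcompose f [:a,1:]) l) ([:-a,1:]^l))"

lemma pcompose_X_power: "pcompose ([:0,1:]^j) q = q^j"
  by (induct j) (simp_all add: pcompose_mult pcompose_pCons pcompose_1)

lemma pcompose_monom: "pcompose (monom c j) q = smult c (q^j)"
  by (simp add: monom_altdef pcompose_smult pcompose_X_power)

lemma split_cut_shift:
  fixes g :: "'k::field poly"
  shows "g = (\<Sum>l<n. monom (coeff g l) l) + monom 1 n * poly_shift n g"
proof (rule poly_eqI)
  fix k
  show "coeff g k = coeff ((\<Sum>l<n. monom (coeff g l) l) + monom 1 n * poly_shift n g) k"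
    by (cases "k < n") (simp_all add: coeff_sum coeff_monom_mult coeff_poly_shift coeff_monom)
qed

lemma tau_dvd: "[:-a,1:]^n dvd (f - tau n f a)"
proof -
  define g where "g = pcompose f [:a,1:]"
  have fg: "f = pcompose g [:-a,1:]"
    unfolding g_def pcompose_assoc[symmetric] by (simp add: pcompose_pCons)
  have t: "tau n f a = pcompose (\<Sum>l<n. monom (coeff g l) l) [:-a,1:]"
    by (simp add: tau_def g_def pcompose_sum pcompose_monom)
  have "f - tau n f a = pcompose (monom 1 n * poly_shift n g) [:-a,1:]"
    apply (subst fg) apply (subst split_cut_shift[of g n]) 
    by (simp add: t pcompose_add)
  also have "\<dots> = [:-a,1:]^n * pcompose (poly_shift n g) [:-a,1:]"
    by (simp add: pcompose_mult pcompose_monom)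
  finally show ?thesis by simp
qed

lemma degree_tau: "n \<ge> 1 \<Longrightarrow> degree (tau n f a) < n"
proof -
  assume n: "n \<ge> 1"
  have "degree (tau n f a) \<le> n - 1"
    unfolding tau_def
    apply (rule degree_sum_le, simp)
    apply (rule order.trans[OF degree_smult_le])
    by (simp add: degree_linear_power)
  with n show ?thesis by linarith
qed

lemma coeff_tau_high: "n \<le> k \<Longrightarrow> coeff (tau n f a) k = 0"
  using degree_tau[of n f a] by (cases "n = 0") (auto simp: tau_def intro!: coeff_eq_0)

lemma low_dvd_zero:
  fixes p :: "'k::field poly"
  assumes "\<forall>k\<ge>n. coeff p k = 0" "[:-a,1:]^n dvd p"
  shows "p = 0"
proof (rule ccontr)
  assume "p \<noteq> 0"
  then have "n \<le> degree p" using dvd_imp_degree_le[OF assms(2)] by (simp add: degree_linear_power)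
  then have "coeff p (degree p) = 0" using assms(1) by simp
  with \<open>p \<noteq> 0\<close> show False by simp
qed

lemma dvd_iff_tau: "[:-a,1:]^n dvd f \<longleftrightarrow> tau n f a = 0"
proof
  assume "[:-a,1:]^n dvd f"
  then have "[:-a,1:]^n dvd f - (f - tau n f a)"
    using tau_dvd[of a n f] by (rule dvd_diff)
  then have "[:-a,1:]^n dvd tau n f a" by simp
  then show "tau n f a = 0" by (intro low_dvd_zero[of n]) (auto simp: coeff_tau_high)
next
  assume "tau n f a = 0" then show "[:-a,1:]^n dvd f" using tau_dvd[of a n f] by simp
qed

lemma tau_add: "tau n (f + g) a = tau n f a + tau n g a"
  by (simp add: tau_def pcompose_add sum.distrib smult_add_left)

lemma smult_sum_right: "smult c (\<Sum>i\<in>A. f i) = (\<Sum>i\<in>A. smult c (f i))"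
  by (induct A rule: infinite_finite_induct) (simp_all add: smult_add_right)

lemma tau_smult: "tau n (smult c f) a = smult c (tau n f a)"
  by (simp add: tau_def pcompose_smult smult_sum_right)

lemma tau_0: "tau n 0 a = 0"
  by (simp add: tau_def)

lemma tau_sum: "tau n (\<Sum>j\<in>A. f j) a = (\<Sum>j\<in>A. tau n (f j) a)"
  by (induct A rule: infinite_finite_induct) (simp_all add: tau_add tau_0)

lemma tau_monom_low: "j < n \<Longrightarrow> tau n (monom 1 j) a = monom 1 j"
proof -
  assume j: "j < n"
  have "monom 1 j - tau n (monom 1 j) a = 0"
    by (rule low_dvd_zero[of n _ a]) (use j in \<open>auto simp: coeff_tau_high tau_dvd coeff_monom\<close>)
  then show ?thesis by simp
qed



lemma differentiable_of_real_at: "(\<lambda>x::real. (of_real x :: 'k::real_normed_algebra_1)) differentiable F"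
  unfolding differentiable_def by (rule exI, rule has_derivative_of_real[OF has_derivative_ident])

definition PD :: "(real \<Rightarrow> 'k::real_normed_field poly) \<Rightarrow> bool" where
  "PD \<phi> \<longleftrightarrow> (\<forall>k x0. (\<lambda>x. coeff (\<phi> x) k) differentiable (at x0))"

lemma PD_const: "PD (\<lambda>x. p)"
  by (simp add: PD_def)

lemma PD_lin:
  assumes "\<And>x0. c differentiable (at x0)"
  shows "PD (\<lambda>x. [:c x, 1:])"
  unfolding PD_def
proof (intro allI)
  fix k x0 show "(\<lambda>x. coeff [:c x, 1:] k) differentiable (at x0)"
    using assms by (cases k) simp_all
qed

lemma PD_mult: "PD \<phi> \<Longrightarrow> PD \<psi> \<Longrightarrow> PD (\<lambda>x. \<phi> x * \<psi> x)"
  unfolding PD_def coeff_mult by (auto intro!: differentiable_sum differentiable_mult)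

lemma PD_power: "PD \<phi> \<Longrightarrow> PD (\<lambda>x. \<phi> x ^ j)"
  by (induct j) (simp_all add: PD_const PD_mult)

definition e_fun :: "nat \<Rightarrow> nat \<Rightarrow> nat \<Rightarrow> real \<Rightarrow> 'k::real_normed_field" where
  "e_fun n j k x = coeff (tau n (monom 1 j) (of_real x)) k"

lemma e_fun_alt: "e_fun n j k x =
  (\<Sum>l<n. coeff ([:of_real x, 1:]^j) l * coeff ([:- of_real x, 1:]^l) k)"
  by (simp add: e_fun_def tau_def pcompose_monom coeff_sum)

lemma e_fun_diff: "(\<lambda>x. e_fun n j k x :: 'k::real_normed_field) differentiable (at x0)"
proof -
  have p1: "PD (\<lambda>x. [:of_real x :: 'k, 1:]^j)"
    by (intro PD_power PD_lin differentiable_of_real_at)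
  have p2: "PD (\<lambda>x. [:- of_real x :: 'k, 1:]^l)" for l
    by (intro PD_power PD_lin differentiable_minus differentiable_of_real_at)
  show ?thesis unfolding e_fun_alt
    using p1 p2 unfolding PD_def by (auto intro!: differentiable_sum differentiable_mult)
qed

lemma e_fun_low: "j < n \<Longrightarrow> e_fun n j k x = (if k = j then 1 else 0)"
  by (simp add: e_fun_def tau_monom_low coeff_monom)

definition Tf :: "nat \<Rightarrow> nat \<Rightarrow> (nat \<Rightarrow> nat \<Rightarrow> 'k::real_normed_field) \<Rightarrow> real \<Rightarrow> nat \<Rightarrow> nat \<Rightarrow> 'k" where
  "Tf n d c x i k = coeff (tau n (monic_poly_of d (c i)) (of_real x)) k"

lemma Tf_lin: "Tf n d c x i k = e_fun n d k x + (\<Sum>j<d. c i j * e_fun n j k x)"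
proof -
  have "monic_poly_of d (c i) = monom 1 d + (\<Sum>j<d. smult (c i j) (monom 1 j))"
    by (simp add: monic_poly_of_def smult_monom)
  then show ?thesis
    by (simp add: Tf_def e_fun_def tau_add tau_sum tau_smult coeff_sum)
qed



definition Vsp :: "nat \<Rightarrow> nat \<Rightarrow> (nat \<Rightarrow> nat \<Rightarrow> 'k::zero) set" where
  "Vsp d m = {c. \<forall>i j. (m \<le> i \<or> d \<le> j) \<longrightarrow> c i j = 0}"

definition bad :: "nat \<Rightarrow> nat \<Rightarrow> nat \<Rightarrow> (nat \<Rightarrow> nat \<Rightarrow> 'k::real_normed_field) \<Rightarrow> real \<Rightarrow> bool" where
  "bad d m n c x \<longleftrightarrow> (\<forall>i<m. n \<le> order (of_real x) (monic_poly_of d (c i)))"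

lemma Qspace_alt: "Qspace d m n = {c \<in> Vsp d m. \<not> (\<exists>x. bad d m n c x)}"
  by (auto simp: Qspace_def Vsp_def bad_def)

lemma coeff_monic_top: "coeff (monic_poly_of d a) d = (1::'k::comm_ring_1)"
  by (simp add: monic_poly_of_def coeff_sum)

lemma monic_nz: "monic_poly_of d a \<noteq> (0::'k::comm_ring_1 poly)"
  using coeff_monic_top[of d a] by (metis coeff_0 zero_neq_one)

lemma bad_iff:
  fixes c :: "nat \<Rightarrow> nat \<Rightarrow> 'k::real_normed_field"
  shows "bad d m n c x \<longleftrightarrow> (\<forall>i<m. \<forall>k<n. Tf n d c x i k = 0)"
proof -
  have "n \<le> order a (monic_poly_of d b) \<longleftrightarrow> (\<forall>k<n. coeff (tau n (monic_poly_of d b) a) k = 0)"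
    for a :: 'k and b
  proof -
    have "n \<le> order a (monic_poly_of d b) \<longleftrightarrow> [:-a,1:]^n dvd monic_poly_of d b"
      using order_divides[of a n "monic_poly_of d b"] monic_nz[of d b] by simp
    also have "\<dots> \<longleftrightarrow> tau n (monic_poly_of d b) a = 0" by (rule dvd_iff_tau)
    also have "\<dots> \<longleftrightarrow> (\<forall>k<n. coeff (tau n (monic_poly_of d b) a) k = 0)"
    proof
      assume h: "\<forall>k<n. coeff (tau n (monic_poly_of d b) a) k = 0"
      show "tau n (monic_poly_of d b) a = 0"
      proof (rule poly_eqI)
        fix k show "coeff (tau n (monic_poly_of d b) a) k = coeff 0 k"
          using h coeff_tau_high[of n k] by (cases "k < n") auto
      qed
    qed simp
    finally show ?thesis .
  qed
  then show ?thesis by (simp add: bad_def Tf_def)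
qed

lemma poly_monic: "poly (monic_poly_of d b) a = a^d + (\<Sum>j<d. b j * a^j)"
  by (simp add: monic_poly_of_def poly_sum poly_monom)

lemma root_bound:
  fixes b :: "nat \<Rightarrow> 'k::real_normed_field"
  assumes "poly (monic_poly_of d b) (of_real x) = 0" "1 \<le> d"
  shows "\<bar>x\<bar> \<le> 1 + (\<Sum>j<d. norm (b j))"
proof (cases "\<bar>x\<bar> \<le> 1")
  case True
  have "0 \<le> (\<Sum>j<d. norm (b j))" by (simp add: sum_nonneg)
  with True show ?thesis by linarith
next
  case False
  let ?a = "of_real x :: 'k"
  have na: "norm ?a = \<bar>x\<bar>" by simp
  have "?a^d = - (\<Sum>j<d. b j * ?a^j)" using assms(1) by (simp add: poly_monic eq_neg_iff_add_eq_0)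
  then have "\<bar>x\<bar>^d = norm (\<Sum>j<d. b j * ?a^j)" by (metis na norm_minus_cancel norm_power)
  also have "\<dots> \<le> (\<Sum>j<d. norm (b j) * \<bar>x\<bar>^j)"
    by (rule order.trans[OF norm_sum]) (simp add: norm_mult norm_power)
  also have "\<dots> \<le> (\<Sum>j<d. norm (b j) * \<bar>x\<bar>^(d-1))"
    using False by (intro sum_mono mult_left_mono power_increasing) auto
  also have "\<dots> = (\<Sum>j<d. norm (b j)) * \<bar>x\<bar>^(d-1)" by (simp add: sum_distrib_right)
  finally have "\<bar>x\<bar> * \<bar>x\<bar>^(d-1) \<le> (\<Sum>j<d. norm (b j)) * \<bar>x\<bar>^(d-1)"
    using assms(2) by (cases d) auto
  moreover have "x \<noteq> 0" using False by auto
  ultimately have "\<bar>x\<bar> \<le> (\<Sum>j<d. norm (b j))"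
    using False by (simp add: mult_le_cancel_right)
  then show ?thesis by simp
qed

lemma bad_root_bound:
  assumes "bad d m n c x" "1 \<le> n" "1 \<le> m" "1 \<le> d"
  shows "\<bar>x\<bar> \<le> 1 + (\<Sum>j<d. norm (c 0 j :: 'k::real_normed_field))"
proof -
  have "n \<le> order (of_real x) (monic_poly_of d (c 0))" using assms by (simp add: bad_def)
  then have "[:-of_real x,1:]^n dvd monic_poly_of d (c 0)" using order_divides by blast
  have "[:-of_real x,1:] dvd monic_poly_of d (c 0)"
  proof (rule dvd_trans[OF _ \<open>[:-of_real x,1:]^n dvd _\<close>])
    show "[:-of_real x,1:] dvd [:-of_real x,1:]^n" using assms(2) by (intro dvd_power) auto
  qed
  then have "poly (monic_poly_of d (c 0)) (of_real x) = 0" by (simp add: poly_eq_0_iff_dvd)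
  then show ?thesis using root_bound assms(4) by blast
qed



lemma diff_snd_snd: "(\<lambda>w::real\<times>real\<times>real. snd (snd w)) differentiable F"
  unfolding differentiable_def
  by (rule exI, rule has_derivative_snd, rule has_derivative_snd, rule has_derivative_ident)

lemma diff_fst: "(\<lambda>w::real\<times>real\<times>real. fst w) differentiable F"
  unfolding differentiable_def
  by (rule exI, rule has_derivative_fst, rule has_derivative_ident)

lemma diff_fst_snd: "(\<lambda>w::real\<times>real\<times>real. fst (snd w)) differentiable F"
  unfolding differentiable_def
  by (rule exI, rule has_derivative_fst, rule has_derivative_snd, rule has_derivative_ident)

lemma diff_fst_fst_snd: "(\<lambda>w::real\<times>real\<times>real. (fst w, fst (snd w))) differentiable (at w0 within S)"
  by (rule differentiable_Pair[OF diff_fst diff_fst_snd])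

lemma sum_P_e:
  assumes Psupp: "\<And>i j. P i j \<noteq> 0 \<Longrightarrow> i < m \<and> j < n" and "k < n" "n \<le> d"
  shows "(\<Sum>j<d. P i j * (e_fun n j k x :: 'k::real_normed_field)) = P i k"
proof -
  have "(\<Sum>j<d. P i j * e_fun n j k x) = (\<Sum>j<d. if j = k then P i k else 0)"
  proof (rule sum.cong)
    fix j assume "j \<in> {..<d}"
    show "P i j * e_fun n j k x = (if j = k then P i k else 0)"
    proof (cases "j < n")
      case True then show ?thesis by (simp add: e_fun_low)
    next
      case False then have "P i j = 0" using Psupp by blast
      with False assms(2) show ?thesis by auto
    qed
  qed simp
  also have "\<dots> = P i k" using assms by simp
  finally show ?thesis .
qed

lemma generic_avoid:
  fixes P :: "'E::euclidean_space \<Rightarrow> nat \<Rightarrow> nat \<Rightarrow> 'k::real_normed_field"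
    and \<pi> :: "(nat \<Rightarrow> nat \<Rightarrow> 'k) \<Rightarrow> 'E"
    and H :: "real \<times> real \<Rightarrow> nat \<Rightarrow> nat \<Rightarrow> 'k"
  assumes dim: "DIM(real \<times> real \<times> real) < DIM('E)"
    and \<pi>P: "\<And>r. \<pi> (P r) = r"
    and Psupp: "\<And>r i j. P r i j \<noteq> 0 \<Longrightarrow> i < m \<and> j < n"
    and \<pi>loc: "\<And>M M'. (\<And>i k. i < m \<Longrightarrow> k < n \<Longrightarrow> M i k = M' i k) \<Longrightarrow> \<pi> M = \<pi> M'"
    and \<pi>diff: "\<And>(F :: real \<times> real \<times> real \<Rightarrow> nat \<Rightarrow> nat \<Rightarrow> 'k) w0.
        (\<And>i k. (\<lambda>w. F w i k) differentiable (at w0)) \<Longrightarrow> (\<lambda>w. \<pi> (F w)) differentiable (at w0)"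
    and Hdiff: "\<And>i j u0. (\<lambda>u. H u i j) differentiable (at u0)"
    and HV: "\<And>u. H u \<in> Vsp d m"
    and nd: "n \<le> d" "1 \<le> n" and e: "0 < e"
  shows "\<exists>r. norm r < e \<and> (\<forall>u. (\<lambda>i j. H u i j + P r i j) \<in> Qspace d m n)"
proof -
  define \<Psi> where "\<Psi> w = \<pi> (\<lambda>i k. - Tf n d (H (fst w, fst (snd w))) (snd (snd w)) i k)"
    for w :: "real \<times> real \<times> real"
  have "\<Psi> differentiable (at w0)" for w0
    unfolding \<Psi>_def Tf_lin
  proof (rule \<pi>diff)
    fix i k
    have ed: "(\<lambda>w. e_fun n j k (snd (snd w)) :: 'k) differentiable (at w0)" for j
      by (rule differentiable_compose[OF e_fun_diff diff_snd_snd])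
    have hd: "(\<lambda>w. H (fst w, fst (snd w)) i j) differentiable (at w0)" for j
      by (rule differentiable_compose[OF Hdiff diff_fst_fst_snd])
    show "(\<lambda>w. - (e_fun n d k (snd (snd w)) +
            (\<Sum>j<d. H (fst w, fst (snd w)) i j * e_fun n j k (snd (snd w))))) differentiable (at w0)"
      using ed hd by (intro differentiable_minus differentiable_add differentiable_sum differentiable_mult) auto
  qed
  then have "\<Psi> differentiable_on UNIV"
    by (simp add: differentiable_at_imp_differentiable_on)
  then have neg: "negligible (range \<Psi>)"
    by (rule negligible_differentiable_image_lowdim[OF dim])
  have "\<not> ball 0 e \<subseteq> range \<Psi>"
  proof
    assume "ball 0 e \<subseteq> range \<Psi>"
    then have "negligible (ball (0::'E) e)" using neg negligible_subset by blast
    with open_not_negligible[of "ball (0::'E) e"] e show False by simp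
  qed
  then obtain r where r: "r \<in> ball 0 e" "r \<notin> range \<Psi>" by blast
  have "(\<lambda>i j. H u i j + P r i j) \<in> Qspace d m n" for u
  proof -
    have V: "(\<lambda>i j. H u i j + P r i j) \<in> Vsp d m"
      using HV[of u] Psupp[of r] nd unfolding Vsp_def by fastforce
    have "\<not> bad d m n (\<lambda>i j. H u i j + P r i j) x" for x
    proof
      assume "bad d m n (\<lambda>i j. H u i j + P r i j) x"
      then have z: "\<And>i k. i < m \<Longrightarrow> k < n \<Longrightarrow> Tf n d (\<lambda>i j. H u i j + P r i j) x i k = 0"
        by (simp add: bad_iff)
      have "Tf n d (\<lambda>i j. H u i j + P r i j) x i k = Tf n d (H u) x i k + P r i k"
        if "k < n" for i k
      proof -
        have "Tf n d (\<lambda>i j. H u i j + P r i j) x i k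
            = Tf n d (H u) x i k + (\<Sum>j<d. P r i j * e_fun n j k x)"
          by (simp add: Tf_lin distrib_right sum.distrib)
        also have "(\<Sum>j<d. P r i j * e_fun n j k x) = P r i k"
          by (rule sum_P_e[OF Psupp that nd(1)])
        finally show ?thesis .
      qed
      with z have "\<And>i k. i < m \<Longrightarrow> k < n \<Longrightarrow> P r i k = - Tf n d (H u) x i k"
        by (metis add_eq_0_iff)
      then have "\<pi> (P r) = \<pi> (\<lambda>i k. - Tf n d (H u) x i k)" by (rule \<pi>loc)
      then have "r = \<Psi> (fst u, snd u, x)" by (simp add: \<pi>P \<Psi>_def)
      with r(2) show False by blast
    qed
    with V show ?thesis by (simp add: Qspace_alt)
  qed
  with r(1) show ?thesis by auto
qed



lemma e_cont: "continuous_on S (\<lambda>x. e_fun n j k x :: 'k::real_normed_field)"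
  by (rule differentiable_imp_continuous_on, rule differentiable_at_imp_differentiable_on, rule e_fun_diff)

lemma nearby:
  fixes g :: "real \<Rightarrow> nat \<Rightarrow> nat \<Rightarrow> 'k::real_normed_field"
  assumes gc: "\<And>i j. continuous_on {0..1} (\<lambda>s. g s i j)"
    and gQ: "\<And>s. s \<in> {0..1} \<Longrightarrow> g s \<in> Qspace d m n"
    and n1: "1 \<le> n" and m1: "1 \<le> m" and d1: "1 \<le> d"
  shows "\<exists>\<epsilon>>0. \<forall>s\<in>{0..1}. \<forall>c\<in>Vsp d m.
           (\<forall>i<m. \<forall>j<d. norm (c i j - g s i j) < \<epsilon>) \<longrightarrow> c \<in> Qspace d m n"
proof -
  have "continuous_on {0..1} (\<lambda>s. \<Sum>j<d. norm (g s 0 j))"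
    by (intro continuous_intros gc)
  then obtain s1 where "s1 \<in> {0..1::real}" and s1: "\<And>s. s \<in> {0..1} \<Longrightarrow> (\<Sum>j<d. norm (g s 0 j)) \<le> (\<Sum>j<d. norm (g s1 0 j))"
    using continuous_attains_sup[OF compact_Icc _ \<open>continuous_on {0..1} (\<lambda>s. \<Sum>j<d. norm (g s 0 j))\<close>]
    by auto
  define B where "B = (\<Sum>j<d. norm (g s1 0 j))"
  define R where "R = 1 + B + real d"
  have "continuous_on {-R..R} (\<lambda>x. \<Sum>j<d. \<Sum>k<n. norm (e_fun n j k x :: 'k))"
    by (intro continuous_intros e_cont)
  moreover have "{-R..R} \<noteq> {}" unfolding R_def B_def by (simp add: sum_nonneg)
  ultimately obtain x1 where x1: "\<And>x. x \<in> {-R..R} \<Longrightarrow>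
       (\<Sum>j<d. \<Sum>k<n. norm (e_fun n j k x :: 'k)) \<le> (\<Sum>j<d. \<Sum>k<n. norm (e_fun n j k x1 :: 'k))"
    using continuous_attains_sup[OF compact_Icc, of "-R" R] by blast
  define M where "M = (\<Sum>j<d. \<Sum>k<n. norm (e_fun n j k x1 :: 'k))"
  have M0: "0 \<le> M" unfolding M_def by (intro sum_nonneg norm_ge_zero)
  have eM: "norm (e_fun n j k x :: 'k) \<le> M" if "x \<in> {-R..R}" "j < d" "k < n" for x j k
  proof -
    have "norm (e_fun n j k x :: 'k) \<le> (\<Sum>k<n. norm (e_fun n j k x :: 'k))"
      by (rule member_le_sum) (use that in auto)
    also have "\<dots> \<le> (\<Sum>j<d. \<Sum>k<n. norm (e_fun n j k x :: 'k))"
      by (rule member_le_sum[where f="\<lambda>j. \<Sum>k<n. norm (e_fun n j k x :: 'k)"]) (use that in \<open>auto intro: sum_nonneg\<close>)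
    also have "\<dots> \<le> M" unfolding M_def using x1 that(1) .
    finally show ?thesis .
  qed
  define K where "K = {0..1::real} \<times> {-R..R}"
  define \<Theta> where "\<Theta> p = (\<Sum>i<m. \<Sum>k<n. norm (Tf n d (g (fst p)) (snd p) i k))" for p
  have "continuous_on K \<Theta>"
  proof -
    have c1: "continuous_on K (\<lambda>p. g (fst p) i j)" for i j
      by (rule continuous_on_compose2[OF gc[of i j] continuous_on_fst]) (auto simp: K_def)
    have c2: "continuous_on K (\<lambda>p. e_fun n j k (snd p) :: 'k)" for j k
      by (rule continuous_on_compose2[OF e_cont continuous_on_snd]) auto
    show ?thesis unfolding \<Theta>_def Tf_lin
      by (intro continuous_intros c1 c2)
  qed
  moreover have "K \<noteq> {}" "compact K"
    using \<open>{-R..R} \<noteq> {}\<close> by (auto simp: K_def compact_Times)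
  ultimately obtain p0 where p0: "p0 \<in> K" "\<And>p. p \<in> K \<Longrightarrow> \<Theta> p0 \<le> \<Theta> p"
    using continuous_attains_inf[of K \<Theta>] by blast
  define \<mu> where "\<mu> = \<Theta> p0"
  have "\<mu> > 0"
  proof -
    have "\<mu> \<ge> 0" unfolding \<mu>_def \<Theta>_def by (intro sum_nonneg norm_ge_zero)
    moreover have "\<mu> \<noteq> 0"
    proof
      assume "\<mu> = 0"
      then have h: "(\<Sum>i<m. \<Sum>k<n. norm (Tf n d (g (fst p0)) (snd p0) i k)) = 0"
        unfolding \<mu>_def \<Theta>_def .
      have "\<forall>i\<in>{..<m}. (\<Sum>k<n. norm (Tf n d (g (fst p0)) (snd p0) i k)) = 0"
        using h by (subst (asm) sum_nonneg_eq_0_iff) (auto intro: sum_nonneg)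
      then have "\<forall>i\<in>{..<m}. \<forall>k\<in>{..<n}. norm (Tf n d (g (fst p0)) (snd p0) i k) = 0"
        by (subst (asm) sum_nonneg_eq_0_iff) auto
      then have "\<forall>i<m. \<forall>k<n. Tf n d (g (fst p0)) (snd p0) i k = 0" by simp
      then have "bad d m n (g (fst p0)) (snd p0)" by (simp add: bad_iff)
      moreover have "g (fst p0) \<in> Qspace d m n" using gQ p0(1) by (auto simp: K_def)
      ultimately show False by (auto simp: Qspace_alt)
    qed
    ultimately show ?thesis by simp
  qed
  define L where "L = real m * real n * real d * M"
  have L0: "0 \<le> L" unfolding L_def using M0 by simp
  define \<epsilon> where "\<epsilon> = min 1 (\<mu> / (L + 1))"
  have \<epsilon>0: "\<epsilon> > 0" unfolding \<epsilon>_def using \<open>\<mu> > 0\<close> L0 by simp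
  have \<epsilon>L: "\<epsilon> * L < \<mu>"
  proof -
    have "\<epsilon> * L \<le> \<mu> / (L + 1) * L" unfolding \<epsilon>_def using L0 by (intro mult_right_mono) auto
    also have "\<dots> < \<mu>" using \<open>\<mu> > 0\<close> L0 by (simp add: field_simps)
    finally show ?thesis .
  qed
  have "c \<in> Qspace d m n"
    if s: "s \<in> {0..1}" and cV: "c \<in> Vsp d m" and close: "\<forall>i<m. \<forall>j<d. norm (c i j - g s i j) < \<epsilon>"
    for s c
  proof (rule ccontr)
    assume "c \<notin> Qspace d m n"
    with cV obtain x where bx: "bad d m n c x" by (auto simp: Qspace_alt)
    have "\<bar>x\<bar> \<le> 1 + (\<Sum>j<d. norm (c 0 j))" by (rule bad_root_bound[OF bx n1 m1 d1])
    also have "\<dots> \<le> 1 + (\<Sum>j<d. norm (g s 0 j) + 1)"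
    proof -
      have "norm (c 0 j) \<le> norm (g s 0 j) + 1" if "j < d" for j
      proof -
        have "norm (c 0 j - g s 0 j) < 1" using close m1 that \<epsilon>_def by force
        then show ?thesis using norm_triangle_ineq2[of "c 0 j" "g s 0 j"] by linarith
      qed
      then have "(\<Sum>j<d. norm (c 0 j)) \<le> (\<Sum>j<d. norm (g s 0 j) + 1)"
        by (intro sum_mono) auto
      then show ?thesis by simp
    qed
    also have "\<dots> \<le> R" unfolding R_def B_def using s1[OF s] by (simp add: sum.distrib)
    finally have xR: "x \<in> {-R..R}" by auto
    then have "(s, x) \<in> K" using s by (simp add: K_def)
    then have "\<mu> \<le> \<Theta> (s, x)" unfolding \<mu>_def by (rule p0(2))
    also have "\<dots> \<le> (\<Sum>i<m. \<Sum>k<n. real d * (\<epsilon> * M))"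
      unfolding \<Theta>_def fst_conv snd_conv
    proof (intro sum_mono)
      fix i k assume i: "i \<in> {..<m}" and k: "k \<in> {..<n}"
      have "Tf n d c x i k = 0" using bx i k by (simp add: bad_iff)
      then have "norm (Tf n d (g s) x i k) = norm (Tf n d (g s) x i k - Tf n d c x i k)" by simp
      also have "\<dots> = norm (\<Sum>j<d. (g s i j - c i j) * e_fun n j k x)"
        by (simp add: Tf_lin left_diff_distrib sum_subtractf)
      also have "\<dots> \<le> (\<Sum>j<d. norm ((g s i j - c i j) * e_fun n j k x))" by (rule norm_sum)
      also have "\<dots> \<le> (\<Sum>j<d. \<epsilon> * M)"
      proof (rule sum_mono)
        fix j assume j: "j \<in> {..<d}"
        have "norm (g s i j - c i j) \<le> \<epsilon>" using close i j by (simp add: norm_minus_commute less_imp_le)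
        moreover have "norm (e_fun n j k x :: 'k) \<le> M" using eM xR j k by auto
        ultimately show "norm ((g s i j - c i j) * e_fun n j k x) \<le> \<epsilon> * M"
          by (simp add: norm_mult mult_mono')
      qed
      finally show "norm (Tf n d (g s) x i k) \<le> real d * (\<epsilon> * M)" by simp
    qed
    also have "\<dots> = \<epsilon> * L" by (simp add: L_def)
    finally show False using \<epsilon>L by simp
  qed
  with \<epsilon>0 show ?thesis by blast
qed



lemma coord_cont:
  fixes F :: "'a::topological_space \<Rightarrow> nat \<Rightarrow> nat \<Rightarrow> 'k::topological_space"
  assumes "\<And>i j. continuous_on S (\<lambda>z. F z i j)"
  shows "continuous_on S F"
  by (intro continuous_on_coordinatewise_then_product assms)

lemma cont_coord:
  fixes F :: "'a::topological_space \<Rightarrow> nat \<Rightarrow> nat \<Rightarrow> 'k::topological_space"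
  assumes "continuous_on S F"
  shows "continuous_on S (\<lambda>z. F z i j)"
  using continuous_on_product_then_coordinatewise[OF continuous_on_product_then_coordinatewise[OF assms, of i], of j] .

lemma homotopic_loops_lin:
  fixes p q :: "real \<Rightarrow> nat \<Rightarrow> nat \<Rightarrow> 'k::real_normed_vector"
  assumes pc: "\<And>i j. continuous_on {0..1} (\<lambda>s. p s i j)"
    and qc: "\<And>i j. continuous_on {0..1} (\<lambda>s. q s i j)"
    and pl: "p 1 = p 0" and ql: "q 1 = q 0"
    and hS: "\<And>t s. t \<in> {0..1} \<Longrightarrow> s \<in> {0..1} \<Longrightarrow> (\<lambda>i j. (1-t) *\<^sub>R p s i j + t *\<^sub>R q s i j) \<in> S"
  shows "homotopic_loops S p q"
  unfolding homotopic_loops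
proof (intro exI conjI)
  let ?h = "\<lambda>z::real\<times>real. (\<lambda>i j. (1 - fst z) *\<^sub>R p (snd z) i j + fst z *\<^sub>R q (snd z) i j)"
  have c1: "continuous_on ({0..1} \<times> {0..1}) (\<lambda>z::real\<times>real. p (snd z) i j)" for i j
    by (rule continuous_on_compose2[OF pc continuous_on_snd]) auto
  have c2: "continuous_on ({0..1} \<times> {0..1}) (\<lambda>z::real\<times>real. q (snd z) i j)" for i j
    by (rule continuous_on_compose2[OF qc continuous_on_snd]) auto
  show "continuous_on ({0..1} \<times> {0..1}) ?h"
    by (intro coord_cont continuous_intros c1 c2)
  show "?h \<in> {0..1} \<times> {0..1} \<rightarrow> S" using hS by auto
  show "\<forall>x\<in>{0..1}. ?h (0, x) = p x" by auto
  show "\<forall>x\<in>{0..1}. ?h (1, x) = q x" by auto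
  show "\<forall>t\<in>{0..1}. pathfinish (?h \<circ> Pair t) = pathstart (?h \<circ> Pair t)"
    by (simp add: pathfinish_def pathstart_def pl ql)
qed

lemma homotopic_const_loops:
  fixes a b :: "'a::topological_space"
  assumes "path_component S a b"
  shows "homotopic_loops S (\<lambda>_. a) (\<lambda>_. b)"
proof -
  obtain g where g: "path g" "path_image g \<subseteq> S" "pathstart g = a" "pathfinish g = b"
    using assms unfolding path_component_def by blast
  show ?thesis unfolding homotopic_loops
  proof (intro exI conjI)
    let ?h = "\<lambda>z::real\<times>real. g (fst z)"
    show "continuous_on ({0..1} \<times> {0..1}) ?h"
      by (rule continuous_on_compose2[OF g(1)[unfolded path_def] continuous_on_fst]) auto
    show "?h \<in> {0..1} \<times> {0..1} \<rightarrow> S" using g(2) by (auto simp: path_image_def)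
    show "\<forall>x\<in>{0..1}. ?h (0, x) = a" using g(3) by (simp add: pathstart_def)
    show "\<forall>x\<in>{0..1}. ?h (1, x) = b" using g(4) by (simp add: pathfinish_def)
    show "\<forall>t\<in>{0..1}. pathfinish (?h \<circ> Pair t) = pathstart (?h \<circ> Pair t)"
      by (simp add: pathfinish_def pathstart_def)
  qed
qed

lemma path_component_lin:
  fixes a b :: "nat \<Rightarrow> nat \<Rightarrow> 'k::real_normed_vector"
  assumes hS: "\<And>t. t \<in> {0..1} \<Longrightarrow> (\<lambda>i j. (1-t) *\<^sub>R a i j + t *\<^sub>R b i j) \<in> S"
  shows "path_component S a b"
  unfolding path_component_def
proof (intro exI conjI)
  let ?g = "\<lambda>t::real. (\<lambda>i j. (1-t) *\<^sub>R a i j + t *\<^sub>R b i j)"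
  show "path ?g" unfolding path_def by (intro coord_cont continuous_intros)
  show "path_image ?g \<subseteq> S" using hS by (auto simp: path_image_def)
  show "pathstart ?g = a" by (simp add: pathstart_def)
  show "pathfinish ?g = b" by (simp add: pathfinish_def)
qed



lemma diff_fst_pair: "(\<lambda>u::real\<times>real. fst u) differentiable F"
  unfolding differentiable_def by (rule exI, rule has_derivative_fst, rule has_derivative_ident)


locale setup_pert =
  fixes d m n :: nat
    and P :: "'E::euclidean_space \<Rightarrow> nat \<Rightarrow> nat \<Rightarrow> 'k::{real_normed_field,euclidean_space}"
    and \<pi> :: "(nat \<Rightarrow> nat \<Rightarrow> 'k) \<Rightarrow> 'E"
  assumes dim: "DIM(real \<times> real \<times> real) < DIM('E)"
    and \<pi>P: "\<And>r. \<pi> (P r) = r"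
    and Psupp: "\<And>r i j. P r i j \<noteq> 0 \<Longrightarrow> i < m \<and> j < n"
    and \<pi>loc: "\<And>M M'. (\<And>i k. i < m \<Longrightarrow> k < n \<Longrightarrow> M i k = M' i k) \<Longrightarrow> \<pi> M = \<pi> M'"
    and \<pi>diff: "\<And>(F :: real \<times> real \<times> real \<Rightarrow> nat \<Rightarrow> nat \<Rightarrow> 'k) w0.
        (\<And>i k. (\<lambda>w. F w i k) differentiable (at w0)) \<Longrightarrow> (\<lambda>w. \<pi> (F w)) differentiable (at w0)"
    and Pnorm: "\<And>r i j. norm (P r i j) \<le> norm r"
    and nd: "n \<le> d" and n1: "1 \<le> n" and m1: "1 \<le> m"
begin

lemma d1: "1 \<le> d" using nd n1 by simp

lemma avoid:
  fixes H :: "real \<times> real \<Rightarrow> nat \<Rightarrow> nat \<Rightarrow> 'k"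
  assumes "\<And>i j u0. (\<lambda>u. H u i j) differentiable (at u0)" "\<And>u. H u \<in> Vsp d m" "0 < e"
  shows "\<exists>r. norm r < e \<and> (\<forall>u. (\<lambda>i j. H u i j + P r i j) \<in> Qspace d m n)"
  by (rule generic_avoid[where P=P and \<pi>=\<pi> and m=m and n=n and d=d, OF dim \<pi>P Psupp \<pi>loc \<pi>diff assms(1,2) nd n1 assms(3)])

lemma near:
  fixes g :: "real \<Rightarrow> nat \<Rightarrow> nat \<Rightarrow> 'k"
  assumes "\<And>i j. continuous_on {0..1} (\<lambda>s. g s i j)" "\<And>s. s \<in> {0..1} \<Longrightarrow> g s \<in> Qspace d m n"
  shows "\<exists>\<epsilon>>0. \<forall>s\<in>{0..1}. \<forall>c\<in>Vsp d m.
           (\<forall>i<m. \<forall>j<d. norm (c i j - g s i j) < \<epsilon>) \<longrightarrow> c \<in> Qspace d m n"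
  by (rule nearby[OF assms n1 m1 d1])

lemma QV: "Qspace d m n \<subseteq> Vsp d m" by (auto simp: Qspace_alt)

lemma PV: "(\<lambda>i j. a i j + t *\<^sub>R P r i j) \<in> Vsp d m" if "a \<in> Vsp d m" for a :: "nat \<Rightarrow> nat \<Rightarrow> 'k" and t r
  using that Psupp[of r] nd unfolding Vsp_def by fastforce

lemma path_comp:
  fixes a b :: "nat \<Rightarrow> nat \<Rightarrow> 'k"
  assumes a: "a \<in> Qspace d m n" and b: "b \<in> Qspace d m n"
  shows "path_component (Qspace d m n) a b"
proof -
  obtain ea where ea: "ea > 0" and hea: "\<And>c. c \<in> Vsp d m \<Longrightarrow>
      (\<forall>i<m. \<forall>j<d. norm (c i j - a i j) < ea) \<Longrightarrow> c \<in> Qspace d m n"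
    using near[of "\<lambda>_. a"] a by auto
  obtain eb where eb: "eb > 0" and heb: "\<And>c. c \<in> Vsp d m \<Longrightarrow>
      (\<forall>i<m. \<forall>j<d. norm (c i j - b i j) < eb) \<Longrightarrow> c \<in> Qspace d m n"
    using near[of "\<lambda>_. b"] b by auto
  define H where "H u = (\<lambda>i j. (1 - fst u) *\<^sub>R a i j + fst u *\<^sub>R b i j)" for u :: "real \<times> real"
  have aV: "a \<in> Vsp d m" and bV: "b \<in> Vsp d m" using a b QV by auto
  have "\<exists>r. norm r < min ea eb \<and> (\<forall>u. (\<lambda>i j. H u i j + P r i j) \<in> Qspace d m n)"
  proof (rule avoid)
    fix i j u0
    show "(\<lambda>u. H u i j) differentiable (at u0)" unfolding H_def
      by (intro differentiable_add differentiable_scaleR differentiable_diff differentiable_const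
          diff_fst_pair) 
  next
    fix u show "H u \<in> Vsp d m" using aV bV by (auto simp: H_def Vsp_def)
  qed (use ea eb in simp)
  then obtain r where r: "norm r < ea" "norm r < eb" and hr: "\<And>u. (\<lambda>i j. H u i j + P r i j) \<in> Qspace d m n"
    by auto
  have small: "norm (t *\<^sub>R P r i j) < e" if "t \<in> {0..1}" "norm r < e" for t i j e
  proof -
    have "norm (t *\<^sub>R P r i j) \<le> norm (P r i j)" using that by (simp add: mult_left_le_one_le)
    also have "\<dots> \<le> norm r" by (rule Pnorm)
    finally show ?thesis using that by simp
  qed
  have 1: "path_component (Qspace d m n) a (\<lambda>i j. a i j + P r i j)"
  proof (rule path_component_lin)
    fix t :: real assume t: "t \<in> {0..1}"
    have "(\<lambda>i j. (1 - t) *\<^sub>R a i j + t *\<^sub>R (a i j + P r i j)) = (\<lambda>i j. a i j + t *\<^sub>R P r i j)"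
      by (simp add: algebra_simps)
    also have "\<dots> \<in> Qspace d m n"
      by (rule hea[OF PV[OF aV]]) (use small[OF t r(1)] in simp)
    finally show "(\<lambda>i j. (1 - t) *\<^sub>R a i j + t *\<^sub>R (a i j + P r i j)) \<in> Qspace d m n" .
  qed
  have 2: "path_component (Qspace d m n) (\<lambda>i j. a i j + P r i j) (\<lambda>i j. b i j + P r i j)"
  proof (rule path_component_lin)
    fix t :: real assume t: "t \<in> {0..1}"
    have "(\<lambda>i j. (1 - t) *\<^sub>R (a i j + P r i j) + t *\<^sub>R (b i j + P r i j)) = (\<lambda>i j. H (t,0) i j + P r i j)"
      by (simp add: H_def algebra_simps)
    then show "(\<lambda>i j. (1 - t) *\<^sub>R (a i j + P r i j) + t *\<^sub>R (b i j + P r i j)) \<in> Qspace d m n"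
      using hr by simp
  qed
  have 3: "path_component (Qspace d m n) (\<lambda>i j. b i j + P r i j) b"
  proof (rule path_component_lin)
    fix t :: real assume t: "t \<in> {0..1}"
    then have t': "1 - t \<in> {0..1}" by simp
    have "(\<lambda>i j. (1 - t) *\<^sub>R (b i j + P r i j) + t *\<^sub>R b i j) = (\<lambda>i j. b i j + (1 - t) *\<^sub>R P r i j)"
      by (simp add: algebra_simps)
    also have "\<dots> \<in> Qspace d m n"
      by (rule heb[OF PV[OF bV]]) (use small[OF t' r(2)] in simp)
    finally show "(\<lambda>i j. (1 - t) *\<^sub>R (b i j + P r i j) + t *\<^sub>R b i j) \<in> Qspace d m n" .
  qed
  show ?thesis using path_component_trans[OF path_component_trans[OF 1 2] 3] .
qed

end



context setup_pert begin

lemma loop_contract: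
  fixes p :: "real \<Rightarrow> nat \<Rightarrow> nat \<Rightarrow> 'k"
  assumes pp: "path p" and pl: "pathfinish p = pathstart p" and pS: "path_image p \<subseteq> Qspace d m n"
  shows "\<exists>a\<in>Qspace d m n. homotopic_loops (Qspace d m n) p (\<lambda>_. a)"
proof -
  have pc: "\<And>i j. continuous_on {0..1} (\<lambda>s. p s i j)"
    using pp unfolding path_def by (rule cont_coord)
  have pQ: "\<And>s. s \<in> {0..1} \<Longrightarrow> p s \<in> Qspace d m n" using pS by (auto simp: path_image_def)
  have p10: "p 1 = p 0" using pl by (simp add: pathfinish_def pathstart_def)
  obtain e1 where e1: "e1 > 0" and he1: "\<And>s c. s \<in> {0..1} \<Longrightarrow> c \<in> Vsp d m \<Longrightarrow>
      (\<forall>i<m. \<forall>j<d. norm (c i j - p s i j) < e1) \<Longrightarrow> c \<in> Qspace d m n"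
    using near[OF pc pQ] by auto
  have "\<forall>ij. \<exists>g. polynomial_function g \<and> g 0 = p 0 (fst ij) (snd ij) \<and> g 1 = p 1 (fst ij) (snd ij) \<and>
           (\<forall>t\<in>{0..1}. norm (g t - p t (fst ij) (snd ij)) < e1)"
  proof
    fix ij :: "nat \<times> nat"
    have "path (\<lambda>s. p s (fst ij) (snd ij))" using pc unfolding path_def .
    from path_approx_polynomial_function[OF this e1] obtain g where
      "polynomial_function g" "pathstart g = p 0 (fst ij) (snd ij)" "pathfinish g = p 1 (fst ij) (snd ij)"
      "\<And>t. t \<in> {0..1} \<Longrightarrow> norm (g t - p t (fst ij) (snd ij)) < e1"
      by (auto simp: pathstart_def pathfinish_def)
    then show "\<exists>g. polynomial_function g \<and> g 0 = p 0 (fst ij) (snd ij) \<and> g 1 = p 1 (fst ij) (snd ij) \<and>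
           (\<forall>t\<in>{0..1}. norm (g t - p t (fst ij) (snd ij)) < e1)"
      by (auto simp: pathstart_def pathfinish_def)
  qed
  then obtain G where G: "\<And>ij. polynomial_function (G ij)" "\<And>ij. G ij 0 = p 0 (fst ij) (snd ij)"
      "\<And>ij. G ij 1 = p 1 (fst ij) (snd ij)"
      "\<And>ij t. t \<in> {0..1} \<Longrightarrow> norm (G ij t - p t (fst ij) (snd ij)) < e1"
    by metis
  define q where "q s = (\<lambda>i j. if i < m \<and> j < d then G (i,j) s else 0)" for s
  have qV: "q s \<in> Vsp d m" for s by (auto simp: q_def Vsp_def)
  have qc: "continuous_on {0..1} (\<lambda>s. q s i j)" for i j
    by (cases "i < m \<and> j < d") (auto simp: q_def intro: continuous_on_polymonial_function G(1))
  have q10: "q 1 = q 0" using G(2,3) p10 by (auto simp: q_def fun_eq_iff)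
  have pV: "p s \<in> Vsp d m" if "s \<in> {0..1}" for s using pQ[OF that] QV by auto
  have qdiff: "(\<lambda>s. q s i j) differentiable (at s0)" for i j s0
    by (cases "i < m \<and> j < d") (auto simp: q_def intro: differentiable_at_polynomial_function G(1))
  have H1: "homotopic_loops (Qspace d m n) p q"
  proof (rule homotopic_loops_lin[OF pc qc p10 q10])
    fix t s :: real assume t: "t \<in> {0..1}" and s: "s \<in> {0..1}"
    show "(\<lambda>i j. (1 - t) *\<^sub>R p s i j + t *\<^sub>R q s i j) \<in> Qspace d m n"
    proof (rule he1[OF s])
      show "(\<lambda>i j. (1 - t) *\<^sub>R p s i j + t *\<^sub>R q s i j) \<in> Vsp d m"
        using pV[OF s] qV[of s] by (auto simp: Vsp_def)
      show "\<forall>i<m. \<forall>j<d. norm ((1 - t) *\<^sub>R p s i j + t *\<^sub>R q s i j - p s i j) < e1"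
      proof (intro allI impI)
        fix i j assume "i < m" "j < d"
        then have "q s i j = G (i,j) s" by (simp add: q_def)
        moreover have "(1 - t) *\<^sub>R p s i j + t *\<^sub>R G (i,j) s - p s i j = t *\<^sub>R (G (i,j) s - p s i j)"
          by (simp add: algebra_simps)
        moreover have "norm (t *\<^sub>R (G (i,j) s - p s i j)) \<le> norm (G (i,j) s - p s i j)"
          using t by (simp add: mult_left_le_one_le)
        moreover have "norm (G (i,j) s - p s i j) < e1" using G(4)[OF s, of "(i,j)"] by simp
        ultimately show "norm ((1 - t) *\<^sub>R p s i j + t *\<^sub>R q s i j - p s i j) < e1" by simp
      qed
    qed
  qed
  have qQ: "q s \<in> Qspace d m n" if "s \<in> {0..1}" for s
    using homotopic_loops_imp_subset[OF H1] that by (auto simp: path_image_def)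
  obtain e2 where e2: "e2 > 0" and he2: "\<And>s c. s \<in> {0..1} \<Longrightarrow> c \<in> Vsp d m \<Longrightarrow>
      (\<forall>i<m. \<forall>j<d. norm (c i j - q s i j) < e2) \<Longrightarrow> c \<in> Qspace d m n"
    using near[OF qc qQ] by auto
  define H where "H u = (\<lambda>i j. (1 - snd u) *\<^sub>R q (fst u) i j)" for u :: "real \<times> real"
  have "\<exists>r. norm r < e2 \<and> (\<forall>u. (\<lambda>i j. H u i j + P r i j) \<in> Qspace d m n)"
  proof (rule avoid)
    fix i j u0
    show "(\<lambda>u. H u i j) differentiable (at u0)" unfolding H_def
    proof (intro differentiable_scaleR differentiable_diff differentiable_const)
      show "(\<lambda>u::real\<times>real. snd u) differentiable at u0"
        unfolding differentiable_def by (rule exI, rule has_derivative_snd, rule has_derivative_ident)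
      show "(\<lambda>u::real\<times>real. q (fst u) i j) differentiable at u0"
        by (rule differentiable_compose[OF qdiff diff_fst_pair])
    qed
  next
    fix u show "H u \<in> Vsp d m" using qV[of "fst u"] by (auto simp: H_def Vsp_def)
  qed (use e2 in simp)
  then obtain r where r: "norm r < e2" and hr: "\<And>u. (\<lambda>i j. H u i j + P r i j) \<in> Qspace d m n"
    by auto
  define q' where "q' s = (\<lambda>i j. q s i j + P r i j)" for s
  have q'c: "continuous_on {0..1} (\<lambda>s. q' s i j)" for i j
    unfolding q'_def by (intro continuous_intros qc)
  have q'10: "q' 1 = q' 0" by (simp add: q'_def q10)
  have H2: "homotopic_loops (Qspace d m n) q q'"
  proof (rule homotopic_loops_lin[OF qc q'c q10 q'10])
    fix t s :: real assume t: "t \<in> {0..1}" and s: "s \<in> {0..1}"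
    have "(\<lambda>i j. (1 - t) *\<^sub>R q s i j + t *\<^sub>R q' s i j) = (\<lambda>i j. q s i j + t *\<^sub>R P r i j)"
      by (simp add: q'_def algebra_simps)
    also have "\<dots> \<in> Qspace d m n"
    proof (rule he2[OF s PV[OF qV]], intro allI impI)
      fix i j
      have "norm (t *\<^sub>R P r i j) \<le> norm (P r i j)" using t by (simp add: mult_left_le_one_le)
      also have "\<dots> \<le> norm r" by (rule Pnorm)
      finally show "norm (q s i j + t *\<^sub>R P r i j - q s i j) < e2" using r by simp
    qed
    finally show "(\<lambda>i j. (1 - t) *\<^sub>R q s i j + t *\<^sub>R q' s i j) \<in> Qspace d m n" .
  qed
  have H3: "homotopic_loops (Qspace d m n) q' (\<lambda>_. P r)"
  proof (rule homotopic_loops_lin[OF q'c _ q'10])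
    fix t s :: real assume t: "t \<in> {0..1}" and s: "s \<in> {0..1}"
    have "(\<lambda>i j. (1 - t) *\<^sub>R q' s i j + t *\<^sub>R P r i j) = (\<lambda>i j. H (s,t) i j + P r i j)"
      by (simp add: q'_def H_def algebra_simps)
    then show "(\<lambda>i j. (1 - t) *\<^sub>R q' s i j + t *\<^sub>R P r i j) \<in> Qspace d m n" using hr by simp
  qed simp_all
  have "P r \<in> Qspace d m n"
  proof -
    have "(\<lambda>i j. H (0,1) i j + P r i j) = P r" by (simp add: H_def)
    then show ?thesis using hr[of "(0,1)"] by simp
  qed
  moreover have "homotopic_loops (Qspace d m n) p (\<lambda>_. P r)"
    using homotopic_loops_trans[OF H1 homotopic_loops_trans[OF H2 H3]] .
  ultimately show ?thesis by blast
qed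

theorem simply_connected_Q: "simply_connected (Qspace d m n :: (nat \<Rightarrow> nat \<Rightarrow> 'k) set)"
  unfolding simply_connected_def
proof (intro allI impI, elim conjE)
  fix p q :: "real \<Rightarrow> nat \<Rightarrow> nat \<Rightarrow> 'k"
  assume p: "path p" "pathfinish p = pathstart p" "path_image p \<subseteq> Qspace d m n"
     and q: "path q" "pathfinish q = pathstart q" "path_image q \<subseteq> Qspace d m n"
  obtain a where a: "a \<in> Qspace d m n" "homotopic_loops (Qspace d m n) p (\<lambda>_. a)"
    using loop_contract[OF p] by blast
  obtain b where b: "b \<in> Qspace d m n" "homotopic_loops (Qspace d m n) q (\<lambda>_. b)"
    using loop_contract[OF q] by blast
  have "homotopic_loops (Qspace d m n) (\<lambda>_. a) (\<lambda>_. b)"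
    by (rule homotopic_const_loops[OF path_comp[OF a(1) b(1)]])
  then show "homotopic_loops (Qspace d m n) p q"
    using a(2) b(2) by (meson homotopic_loops_sym homotopic_loops_trans)
qed

end



lemma degree_monic_le: "degree (monic_poly_of d a) \<le> d"
  unfolding monic_poly_of_def
  by (intro degree_add_le degree_sum_le) (auto intro: order.trans[OF degree_monom_le])

lemma Q_eq_V:
  assumes "d < n" "1 \<le> m"
  shows "Qspace d m n = (Vsp d m :: (nat \<Rightarrow> nat \<Rightarrow> 'k::real_normed_field) set)"
proof -
  have "\<not> bad d m n (c :: nat \<Rightarrow> nat \<Rightarrow> 'k) x" for c x
  proof
    assume "bad d m n c x"
    then have "n \<le> order (of_real x) (monic_poly_of d (c 0))" using assms(2) by (simp add: bad_def)
    also have "\<dots> \<le> degree (monic_poly_of d (c 0))" by (rule order_degree[OF monic_nz])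
    also have "\<dots> \<le> d" by (rule degree_monic_le)
    finally show False using assms(1) by simp
  qed
  then show ?thesis by (auto simp: Qspace_alt)
qed

lemma simply_connected_V: "simply_connected (Vsp d m :: (nat \<Rightarrow> nat \<Rightarrow> 'k::real_normed_field) set)"
  unfolding simply_connected_def
proof (intro allI impI, elim conjE)
  have c: "homotopic_loops (Vsp d m) p (\<lambda>_ i j. 0)"
    if "path p" "pathfinish p = pathstart p" "path_image p \<subseteq> Vsp d m" for p :: "real \<Rightarrow> nat \<Rightarrow> nat \<Rightarrow> 'k"
  proof (rule homotopic_loops_lin)
    show "continuous_on {0..1} (\<lambda>s. p s i j)" for i j using that(1) unfolding path_def by (rule cont_coord)
    show "p 1 = p 0" using that(2) by (simp add: pathfinish_def pathstart_def)
    fix t s :: real assume "s \<in> {0..1}"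
    then have "p s \<in> Vsp d m" using that(3) by (auto simp: path_image_def)
    then show "(\<lambda>i j. (1 - t) *\<^sub>R p s i j + t *\<^sub>R (0::'k)) \<in> Vsp d m"
      by (auto simp: Vsp_def)
  qed simp_all
  fix p q :: "real \<Rightarrow> nat \<Rightarrow> nat \<Rightarrow> 'k"
  assume p: "path p" "pathfinish p = pathstart p" "path_image p \<subseteq> Vsp d m"
     and q: "path q" "pathfinish q = pathstart q" "path_image q \<subseteq> Vsp d m"
  show "homotopic_loops (Vsp d m) p q"
    using c[OF p] c[OF q] by (meson homotopic_loops_sym homotopic_loops_trans)
qed

definition sl :: "nat \<Rightarrow> nat \<Rightarrow> nat \<times> nat" where "sl n l = (l div n, l mod n)"

lemma sl_inj [simp]: "sl n a = sl n b \<longleftrightarrow> a = b"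
  unfolding sl_def by (metis div_mult_mod_eq prod.inject)

lemma sl_range:
  assumes "l < m * n"
  shows "fst (sl n l) < m" "snd (sl n l) < n"
proof -
  have "n > 0" using assms by (cases n) auto
  then show "snd (sl n l) < n" by (simp add: sl_def)
  show "fst (sl n l) < m" using assms by (simp add: sl_def less_mult_imp_div_less)
qed

definition Pr :: "nat \<Rightarrow> real \<times> real \<times> real \<times> real \<Rightarrow> nat \<Rightarrow> nat \<Rightarrow> real" where
  "Pr n r i j = (if (i,j) = sl n 0 then fst r else if (i,j) = sl n 1 then fst (snd r)
     else if (i,j) = sl n 2 then fst (snd (snd r)) else if (i,j) = sl n 3 then snd (snd (snd r)) else 0)"

definition \<pi>r :: "nat \<Rightarrow> (nat \<Rightarrow> nat \<Rightarrow> real) \<Rightarrow> real \<times> real \<times> real \<times> real" where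
  "\<pi>r n M = (M (fst (sl n 0)) (snd (sl n 0)), M (fst (sl n 1)) (snd (sl n 1)),
             M (fst (sl n 2)) (snd (sl n 2)), M (fst (sl n 3)) (snd (sl n 3)))"

definition Pc :: "nat \<Rightarrow> complex \<times> complex \<Rightarrow> nat \<Rightarrow> nat \<Rightarrow> complex" where
  "Pc n r i j = (if (i,j) = sl n 0 then fst r else if (i,j) = sl n 1 then snd r else 0)"

definition \<pi>c :: "nat \<Rightarrow> (nat \<Rightarrow> nat \<Rightarrow> complex) \<Rightarrow> complex \<times> complex" where
  "\<pi>c n M = (M (fst (sl n 0)) (snd (sl n 0)), M (fst (sl n 1)) (snd (sl n 1)))"

lemma setup_real:
  assumes "4 \<le> m * n" "n \<le> d" "1 \<le> n" "1 \<le> m"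
  shows "setup_pert d m n (Pr n) (\<pi>r n)"
proof
  have r: "fst (sl n l) < m" "snd (sl n l) < n" if "l < 4" for l
    using sl_range[of l m n] that assms(1) by auto
  show "DIM(real \<times> real \<times> real) < DIM(real \<times> real \<times> real \<times> real)" by simp
  show "\<pi>r n (Pr n r) = r" for r by (simp add: \<pi>r_def Pr_def)
  show "Pr n r i j \<noteq> 0 \<Longrightarrow> i < m \<and> j < n" for r i j
    using r[of 0] r[of 1] r[of 2] r[of 3] by (auto simp: Pr_def prod_eq_iff split: if_splits)
  show "\<pi>r n M = \<pi>r n M'" if "\<And>i k. i < m \<Longrightarrow> k < n \<Longrightarrow> M i k = M' i k" for M M'
    using that r[of 0] r[of 1] r[of 2] r[of 3] by (simp add: \<pi>r_def)
  show "(\<lambda>w. \<pi>r n (F w)) differentiable (at w0)" if "\<And>i k. (\<lambda>w. F w i k) differentiable (at w0)"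
    for F :: "real \<times> real \<times> real \<Rightarrow> nat \<Rightarrow> nat \<Rightarrow> real" and w0
    unfolding \<pi>r_def by (intro differentiable_Pair that)
  show "norm (Pr n r i j) \<le> norm r" for r i j
  proof -
    have a: "norm (snd r) \<le> norm r" "norm (snd (snd r)) \<le> norm (snd r)"
      "norm (snd (snd (snd r))) \<le> norm (snd (snd r))" by (metis norm_snd_le prod.collapse)+
    have b: "norm (fst r) \<le> norm r" "norm (fst (snd r)) \<le> norm (snd r)"
      "norm (fst (snd (snd r))) \<le> norm (snd (snd r))" by (metis norm_fst_le prod.collapse)+
    show ?thesis unfolding Pr_def using a b by (auto simp del: real_norm_def)
  qed
qed (use assms in auto)

lemma setup_complex:
  assumes "2 \<le> m * n" "n \<le> d" "1 \<le> n" "1 \<le> m"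
  shows "setup_pert d m n (Pc n) (\<pi>c n)"
proof
  have r: "fst (sl n l) < m" "snd (sl n l) < n" if "l < 2" for l
    using sl_range[of l m n] that assms(1) by auto
  show "DIM(real \<times> real \<times> real) < DIM(complex \<times> complex)" by simp
  show "\<pi>c n (Pc n r) = r" for r by (simp add: \<pi>c_def Pc_def)
  show "Pc n r i j \<noteq> 0 \<Longrightarrow> i < m \<and> j < n" for r i j
    using r[of 0] r[of 1] by (auto simp: Pc_def prod_eq_iff split: if_splits)
  show "\<pi>c n M = \<pi>c n M'" if "\<And>i k. i < m \<Longrightarrow> k < n \<Longrightarrow> M i k = M' i k" for M M'
    using that r[of 0] r[of 1] by (simp add: \<pi>c_def)
  show "(\<lambda>w. \<pi>c n (F w)) differentiable (at w0)" if "\<And>i k. (\<lambda>w. F w i k) differentiable (at w0)"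
    for F :: "real \<times> real \<times> real \<Rightarrow> nat \<Rightarrow> nat \<Rightarrow> complex" and w0
    unfolding \<pi>c_def by (intro differentiable_Pair that)
  show "norm (Pc n r i j) \<le> norm r" for r i j
  proof -
    have "norm (fst r) \<le> norm r" "norm (snd r) \<le> norm r" by (metis norm_fst_le norm_snd_le prod.collapse)+
    then show ?thesis unfolding Pc_def by auto
  qed
qed (use assms in auto)

theorem lemma6p1:
  fixes d m n :: nat
  assumes "1 \<le> d" and "1 \<le> m" and "1 \<le> n" and "(m, n) \<noteq> (1, 1)"
  shows "(4 \<le> 1 * m * n \<longrightarrow> simply_connected (Qspace d m n :: (nat \<Rightarrow> nat \<Rightarrow> real) set))
       \<and> (4 \<le> 2 * m * n \<longrightarrow> simply_connected (Qspace d m n :: (nat \<Rightarrow> nat \<Rightarrow> complex) set))"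
proof (cases "d < n")
  case True
  then show ?thesis using Q_eq_V[OF True assms(2)] simply_connected_V by metis
next
  case False
  then have nd: "n \<le> d" by simp
  show ?thesis
  proof (intro conjI impI)
    assume "4 \<le> 1 * m * n"
    then have "4 \<le> m * n" by simp
    from setup_pert.simply_connected_Q[OF setup_real[OF this nd assms(3,2)]]
    show "simply_connected (Qspace d m n :: (nat \<Rightarrow> nat \<Rightarrow> real) set)" .
  next
    assume "4 \<le> 2 * m * n"
    then have "2 \<le> m * n" by simp
    from setup_pert.simply_connected_Q[OF setup_complex[OF this nd assms(3,2)]]
    show "simply_connected (Qspace d m n :: (nat \<Rightarrow> nat \<Rightarrow> complex) set)" .
  qed
qed


end
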